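(* Let $\mu(x,t)=\min(F(x,t),G(x,t))$. Then for all $x_1,x_2,t>0$, $$\int_{x_1}^{x_2}m(x,t)\,dx=\mu(x_1,t)-\mu(x_2,t),$$ and for all $x,t_1,t_2>0$, $$\int_{t_1}^{t_2}q(x,t)\,dt=\mu(x,t_2)-\mu(x,t_1).$$
   Context: Standing assumptions: $u_0,u_b:[0,\infty)\to\mathbb{R}$ bounded measurable with $u_b>0$; $\rho_0,\rho_b:[0,\infty)\to(0,\infty)$ positive locally bounded measurable. For $x,t,y,\tau\ge0$: $F(y,x,t)=\int_0^y[tu_0(\eta)+\eta-x]\rho_0(\eta)\,d\eta$, $G(\tau,x,t)=\int_0^\tau[x-u_b(\eta)(t-\eta)]\rho_b(\eta)u_b(\eta)\,d\eta$, $F(x,t)=\min_{y\ge0}F(y,x,t)$, $G(x,t)=\min_{\tau\ge0}G(\tau,x,t)$ (minima attained); $y_*$ is the smallest minimizer of $F(\cdot,x,t)$ and $\tau_*$ the smallest minimizer of $G(\cdot,x,t)$. For $x,t>0$: $m(x,t)=\int_0^{y_*(x,t)}\rho_0$ and $q(x,t)=\int_0^{y_*(x,t)}\rho_0u_0$ if $F(x,t)\le G(x,t)$; $m(x,t)=-\int_0^{\tau_*(x,t)}\rho_bu_b$ and $q(x,t)=-\int_0^{\tau_*(x,t)}\rho_bu_b^2$ if $F(x,t)>G(x,t)$. *)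

theory Defs
  imports "HOL-Analysis.Analysis"
begin

text \<open>Data: u0 ub rho0 rhob are functions on [0,inf), modelled as real functions
whose values off [0,inf) are irrelevant.\<close>

definition Ffun :: "(real \<Rightarrow> real) \<Rightarrow> (real \<Rightarrow> real) \<Rightarrow> real \<Rightarrow> real \<Rightarrow> real \<Rightarrow> real" where
  "Ffun u0 rho0 y x t = (LINT \<eta>:{0..y}|lborel. (t * u0 \<eta> + \<eta> - x) * rho0 \<eta>)"

definition Gfun :: "(real \<Rightarrow> real) \<Rightarrow> (real \<Rightarrow> real) \<Rightarrow> real \<Rightarrow> real \<Rightarrow> real \<Rightarrow> real" where
  "Gfun ub rhob \<tau> x t = (LINT \<eta>:{0..\<tau>}|lborel. (x - ub \<eta> * (t - \<eta>)) * rhob \<eta> * ub \<eta>)"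

definition Fmin :: "(real \<Rightarrow> real) \<Rightarrow> (real \<Rightarrow> real) \<Rightarrow> real \<Rightarrow> real \<Rightarrow> real" where
  "Fmin u0 rho0 x t = Inf ((\<lambda>y. Ffun u0 rho0 y x t) ` {0..})"

definition Gmin :: "(real \<Rightarrow> real) \<Rightarrow> (real \<Rightarrow> real) \<Rightarrow> real \<Rightarrow> real \<Rightarrow> real" where
  "Gmin ub rhob x t = Inf ((\<lambda>\<tau>. Gfun ub rhob \<tau> x t) ` {0..})"

definition ystar :: "(real \<Rightarrow> real) \<Rightarrow> (real \<Rightarrow> real) \<Rightarrow> real \<Rightarrow> real \<Rightarrow> real" where
  "ystar u0 rho0 x t = (LEAST y. 0 \<le> y \<and> Ffun u0 rho0 y x t = Fmin u0 rho0 x t)"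

definition taustar :: "(real \<Rightarrow> real) \<Rightarrow> (real \<Rightarrow> real) \<Rightarrow> real \<Rightarrow> real \<Rightarrow> real" where
  "taustar ub rhob x t = (LEAST \<tau>. 0 \<le> \<tau> \<and> Gfun ub rhob \<tau> x t = Gmin ub rhob x t)"

definition mfun :: "(real \<Rightarrow> real) \<Rightarrow> (real \<Rightarrow> real) \<Rightarrow> (real \<Rightarrow> real) \<Rightarrow> (real \<Rightarrow> real)
    \<Rightarrow> real \<Rightarrow> real \<Rightarrow> real" where
  "mfun u0 rho0 ub rhob x t =
     (if Fmin u0 rho0 x t \<le> Gmin ub rhob x t
      then (LINT \<eta>:{0..ystar u0 rho0 x t}|lborel. rho0 \<eta>)
      else - (LINT \<eta>:{0..taustar ub rhob x t}|lborel. rhob \<eta> * ub \<eta>))"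

definition qfun :: "(real \<Rightarrow> real) \<Rightarrow> (real \<Rightarrow> real) \<Rightarrow> (real \<Rightarrow> real) \<Rightarrow> (real \<Rightarrow> real)
    \<Rightarrow> real \<Rightarrow> real \<Rightarrow> real" where
  "qfun u0 rho0 ub rhob x t =
     (if Fmin u0 rho0 x t \<le> Gmin ub rhob x t
      then (LINT \<eta>:{0..ystar u0 rho0 x t}|lborel. rho0 \<eta> * u0 \<eta>)
      else - (LINT \<eta>:{0..taustar ub rhob x t}|lborel. rhob \<eta> * (ub \<eta>)\<^sup>2))"

definition mu :: "(real \<Rightarrow> real) \<Rightarrow> (real \<Rightarrow> real) \<Rightarrow> (real \<Rightarrow> real) \<Rightarrow> (real \<Rightarrow> real)
    \<Rightarrow> real \<Rightarrow> real \<Rightarrow> real" where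
  "mu u0 rho0 ub rhob x t = min (Fmin u0 rho0 x t) (Gmin ub rhob x t)"

end

theory Submission imports Defs begin

lemma supergrad_le:
  fixes \<phi> g :: "real \<Rightarrow> real"
  assumes sg: "\<And>x x'. x > 0 \<Longrightarrow> x' > 0 \<Longrightarrow> \<phi> x' \<le> \<phi> x + g x * (x' - x)"
  and a: "a > 0" and ab: "a \<le> b"
  shows "set_integrable lborel {a..b} g \<and> integral {a..b} g = \<phi> b - \<phi> a"
proof -
  have anti: "g x' \<le> g x" if "0 < x" "x \<le> x'" for x x'
  proof (cases "x = x'")
    case False
    have "\<phi> x' \<le> \<phi> x + g x * (x' - x)" "\<phi> x \<le> \<phi> x' + g x' * (x - x')"
      using sg that by auto
    then have "0 \<le> (g x - g x') * (x' - x)" by (simp add: algebra_simps)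
    moreover have "x' - x > 0" using that False by simp
    ultimately show ?thesis by (simp add: zero_le_mult_iff)
  qed simp
  have mono: "mono_on {a..b} (\<lambda>x. - g x)"
    by (rule mono_onI) (use anti a in auto)
  have meas: "g \<in> borel_measurable (restrict_space borel {a..b})"
    using borel_measurable_uminus[OF borel_measurable_mono_on_fnc[OF mono]] by simp
  have meas2: "(\<lambda>x. indicator {a..b} x *\<^sub>R g x) \<in> borel_measurable borel"
    using meas by (subst (asm) borel_measurable_restrict_space_iff) auto
  have intg: "set_integrable lborel {a..b} g"
    unfolding set_integrable_def
  proof (rule integrableI_bounded_set[where A="{a..b}" and B="\<bar>g a\<bar> + \<bar>g b\<bar>"])
    show "(\<lambda>x. indicator {a..b} x *\<^sub>R g x) \<in> borel_measurable lborel"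
      using meas2 by simp
    show "AE x in lborel. x \<in> {a..b} \<longrightarrow> norm (indicator {a..b} x *\<^sub>R g x) \<le> \<bar>g a\<bar> + \<bar>g b\<bar>"
    proof (rule AE_I2, rule impI)
      fix x assume x: "x \<in> {a..b}"
      then have "g b \<le> g x" "g x \<le> g a" using anti a by auto
      then show "norm (indicator {a..b} x *\<^sub>R g x) \<le> \<bar>g a\<bar> + \<bar>g b\<bar>" using x by auto
    qed
  qed (use ab in auto)
  have gI: "g integrable_on {a..b}"
    using set_borel_integral_eq_integral(1)[OF intg] .
  define D where "D x = \<phi> x - integral {a..x} g" for x
  have step: "\<bar>D x' - D x\<bar> \<le> (g x - g x') * (x' - x)" if "a \<le> x" "x \<le> x'" "x' \<le> b" for x x'
  proof -
    have gI': "g integrable_on {x..x'}" using gI that by (auto intro: integrable_on_subinterval)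
    have comb: "integral {a..x'} g = integral {a..x} g + integral {x..x'} g"
    proof -
      have "integral {a..x} g + integral {x..x'} g = integral {a..x'} g"
        using Henstock_Kurzweil_Integration.integral_combine[where f=g and a=a and c=x and b=x'] that
          integrable_on_subinterval[OF gI, of a x'] by auto
      then show ?thesis by simp
    qed
    have up: "integral {x..x'} g \<le> g x * (x' - x)"
    proof -
      have "integral {x..x'} g \<le> integral {x..x'} (\<lambda>_. g x)"
        using gI' anti a that by (intro integral_le) auto
      then show ?thesis using that by (simp add: mult.commute)
    qed
    have lo: "g x' * (x' - x) \<le> integral {x..x'} g"
    proof -
      have "integral {x..x'} (\<lambda>_. g x') \<le> integral {x..x'} g"
        using gI' anti a that by (intro integral_le) auto
      then show ?thesis using that by (simp add: mult.commute)
    qed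
    have p1: "\<phi> x' \<le> \<phi> x + g x * (x' - x)" "\<phi> x \<le> \<phi> x' + g x' * (x - x')"
      using sg that a by auto
    show ?thesis unfolding D_def comb using up lo p1 by (simp add: algebra_simps abs_le_iff)
  qed
  have bound: "\<bar>D b - D a\<bar> \<le> (g a - g b) * ((b - a) / real n)" if n: "n \<ge> 1" for n :: nat
  proof -
    define \<Delta> where "\<Delta> = (b - a) / real n"
    have \<Delta>: "\<Delta> \<ge> 0" using ab n by (simp add: \<Delta>_def)
    have "k \<le> n \<longrightarrow> \<bar>D (a + real k * \<Delta>) - D a\<bar> \<le> (g a - g (a + real k * \<Delta>)) * \<Delta>" for k
    proof (induction k)
      case 0 then show ?case by simp
    next
      case (Suc k)
      show ?case
      proof
        assume k: "Suc k \<le> n"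
        have kb: "a + real (Suc k) * \<Delta> \<le> b"
        proof -
          have "real (Suc k) * \<Delta> \<le> real n * \<Delta>" using k \<Delta> by (intro mult_right_mono) auto
          also have "\<dots> = b - a" using n by (simp add: \<Delta>_def)
          finally show ?thesis by simp
        qed
        have kk: "a \<le> a + real k * \<Delta>" using \<Delta> by simp
        have s: "\<bar>D (a + real (Suc k) * \<Delta>) - D (a + real k * \<Delta>)\<bar>
            \<le> (g (a + real k * \<Delta>) - g (a + real (Suc k) * \<Delta>)) * \<Delta>"
          using step[OF kk _ kb] \<Delta> by (simp add: algebra_simps)
        have ih: "\<bar>D (a + real k * \<Delta>) - D a\<bar> \<le> (g a - g (a + real k * \<Delta>)) * \<Delta>"
          using Suc.IH k by simp
        show "\<bar>D (a + real (Suc k) * \<Delta>) - D a\<bar> \<le> (g a - g (a + real (Suc k) * \<Delta>)) * \<Delta>"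
          using s ih by (simp add: algebra_simps)
      qed
    qed
    from this[of n] show ?thesis using n by (simp add: \<Delta>_def)
  qed
  have "D b = D a"
  proof (rule ccontr)
    assume ne: "D b \<noteq> D a"
    define K where "K = (g a - g b) * (b - a)"
    have K: "K \<ge> 0" using anti a ab by (simp add: K_def)
    obtain n :: nat where n: "K / \<bar>D b - D a\<bar> < real n" using reals_Archimedean2 by blast
    have "K / \<bar>D b - D a\<bar> \<ge> 0" using K by simp
    then have "real n > 0" using n by linarith
    then have n1: "n \<ge> 1" by simp
    have "\<bar>D b - D a\<bar> \<le> K / real n" using bound[OF n1] by (simp add: K_def)
    then have "\<bar>D b - D a\<bar> * real n \<le> K" using n1 by (simp add: field_simps)
    moreover have "K < real n * \<bar>D b - D a\<bar>" using n ne by (simp add: field_simps)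
    ultimately show False by (simp add: algebra_simps)
  qed
  then show ?thesis using intg by (simp add: D_def)
qed

lemma supergrad_FTC:
  fixes \<phi> g :: "real \<Rightarrow> real"
  assumes sg: "\<And>x x'. x > 0 \<Longrightarrow> x' > 0 \<Longrightarrow> \<phi> x' \<le> \<phi> x + g x * (x' - x)"
  and a: "a > 0" and b: "b > 0"
  shows "interval_lebesgue_integrable lborel (ereal a) (ereal b) g \<and> (LBINT x=a..b. g x) = \<phi> b - \<phi> a"
proof -
  have *: "interval_lebesgue_integrable lborel (ereal a) (ereal b) g \<and> (LBINT x=a..b. g x) = \<phi> b - \<phi> a"
    if "a > 0" "a \<le> b" for a b
  proof -
    from supergrad_le[OF sg that] have I: "set_integrable lborel {a..b} g" 
      and E: "integral {a..b} g = \<phi> b - \<phi> a" by auto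
    have "interval_lebesgue_integrable lborel (ereal a) (ereal b) g"
      unfolding interval_lebesgue_integrable_def using that
      by (auto intro: set_integrable_subset[OF I])
    moreover have "(LBINT x=a..b. g x) = \<phi> b - \<phi> a"
      using interval_integral_eq_integral[OF that(2) I] E by simp
    ultimately show ?thesis by simp
  qed
  show ?thesis
  proof (cases "a \<le> b")
    case True then show ?thesis using *[OF a] by simp
  next
    case False
    then have "interval_lebesgue_integrable lborel (ereal b) (ereal a) g \<and> (LBINT x=b..a. g x) = \<phi> a - \<phi> b"
      using *[OF b] by simp
    then show ?thesis
      by (metis interval_integral_endpoints_reverse interval_integrable_endpoints_reverse minus_diff_eq)
  qed
qed


definition lb :: "(real \<Rightarrow> real) \<Rightarrow> bool" where
  "lb f \<longleftrightarrow> f \<in> borel_measurable (restrict_space borel {0..}) \<and> (\<forall>b\<ge>0. \<exists>C. \<forall>\<eta>\<in>{0..b}. \<bar>f \<eta>\<bar> \<le> C)"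

lemma sbm_iff: "set_borel_measurable borel {0..} f \<longleftrightarrow> f \<in> borel_measurable (restrict_space borel {0::real..})"
  for f :: "real \<Rightarrow> real"
  unfolding set_borel_measurable_def
  by (subst borel_measurable_restrict_space_iff) auto

lemma lb_const: "lb (\<lambda>_. c)"
  unfolding lb_def by auto

lemma lb_id: "lb (\<lambda>\<eta>. \<eta>)"
  unfolding lb_def
proof safe
  show "(\<lambda>\<eta>. \<eta>) \<in> borel_measurable (restrict_space borel {0..})"
    by (rule measurable_restrict_space1) simp
  fix b :: real assume "b \<ge> 0"
  then show "\<exists>C. \<forall>\<eta>\<in>{0..b}. \<bar>\<eta>\<bar> \<le> C" by (intro exI[of _ b]) auto
qed

lemma lb_add: "lb f \<Longrightarrow> lb g \<Longrightarrow> lb (\<lambda>\<eta>. f \<eta> + g \<eta>)"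
  unfolding lb_def
proof safe
  assume "f \<in> borel_measurable (restrict_space borel {0..})" "g \<in> borel_measurable (restrict_space borel {0..})"
  then show "(\<lambda>\<eta>. f \<eta> + g \<eta>) \<in> borel_measurable (restrict_space borel {0..})" by simp
next
  fix b :: real assume b: "b \<ge> 0" and f: "\<forall>b\<ge>0. \<exists>C. \<forall>\<eta>\<in>{0..b}. \<bar>f \<eta>\<bar> \<le> C"
     and g: "\<forall>b\<ge>0. \<exists>C. \<forall>\<eta>\<in>{0..b}. \<bar>g \<eta>\<bar> \<le> C"
  obtain C1 where C1: "\<forall>\<eta>\<in>{0..b}. \<bar>f \<eta>\<bar> \<le> C1" using f b by blast
  obtain C2 where C2: "\<forall>\<eta>\<in>{0..b}. \<bar>g \<eta>\<bar> \<le> C2" using g b by blast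
  show "\<exists>C. \<forall>\<eta>\<in>{0..b}. \<bar>f \<eta> + g \<eta>\<bar> \<le> C"
    by (rule exI[of _ "C1 + C2"]) (use C1 C2 in \<open>auto intro!: order.trans[OF abs_triangle_ineq] add_mono\<close>)
qed

lemma lb_mult: "lb f \<Longrightarrow> lb g \<Longrightarrow> lb (\<lambda>\<eta>. f \<eta> * g \<eta>)"
  unfolding lb_def
proof safe
  assume "f \<in> borel_measurable (restrict_space borel {0..})" "g \<in> borel_measurable (restrict_space borel {0..})"
  then show "(\<lambda>\<eta>. f \<eta> * g \<eta>) \<in> borel_measurable (restrict_space borel {0..})" by simp
next
  fix b :: real assume b: "b \<ge> 0" and f: "\<forall>b\<ge>0. \<exists>C. \<forall>\<eta>\<in>{0..b}. \<bar>f \<eta>\<bar> \<le> C"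
     and g: "\<forall>b\<ge>0. \<exists>C. \<forall>\<eta>\<in>{0..b}. \<bar>g \<eta>\<bar> \<le> C"
  obtain C1 where C1: "\<forall>\<eta>\<in>{0..b}. \<bar>f \<eta>\<bar> \<le> C1" using f b by blast
  obtain C2 where C2: "\<forall>\<eta>\<in>{0..b}. \<bar>g \<eta>\<bar> \<le> C2" using g b by blast
  have C1p: "C1 \<ge> 0" using C1 b by (meson abs_ge_zero atLeastAtMost_iff order.trans order_refl)
  show "\<exists>C. \<forall>\<eta>\<in>{0..b}. \<bar>f \<eta> * g \<eta>\<bar> \<le> C"
    by (rule exI[of _ "C1 * C2"]) (use C1 C2 C1p in \<open>auto simp: abs_mult intro!: mult_mono\<close>)
qed

lemma lb_uminus: "lb f \<Longrightarrow> lb (\<lambda>\<eta>. - f \<eta>)"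
  using lb_mult[OF lb_const[of "-1"]] by simp

lemma lb_diff: "lb f \<Longrightarrow> lb g \<Longrightarrow> lb (\<lambda>\<eta>. f \<eta> - g \<eta>)"
  using lb_add[OF _ lb_uminus] by simp

lemma lb_integrable:
  assumes "lb f" "y \<ge> 0"
  shows "set_integrable lborel {0..y} f"
proof -
  obtain C where C: "\<forall>\<eta>\<in>{0..y}. \<bar>f \<eta>\<bar> \<le> C" using assms unfolding lb_def by blast
  have m: "set_borel_measurable borel {0..} f" using assms sbm_iff lb_def by blast
  have m2: "set_borel_measurable borel {0..y} f"
    by (rule set_borel_measurable_subset[OF m]) auto
  show ?thesis
    unfolding set_integrable_def
    by (rule integrableI_bounded_set[where A="{0..y}" and B=C])
       (use m2 C assms(2) in \<open>auto simp: set_borel_measurable_def\<close>)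
qed

lemma lb_integral_eq:
  assumes "lb f" "y \<ge> 0"
  shows "(LINT \<eta>:{0..y}|lborel. f \<eta>) = integral {0..y} f" "f integrable_on {0..y}"
  using set_borel_integral_eq_integral[OF lb_integrable[OF assms]] by auto

lemma lb_cont:
  assumes "lb f" "b \<ge> 0"
  shows "continuous_on {0..b} (\<lambda>y. LINT \<eta>:{0..y}|lborel. f \<eta>)"
proof -
  have "continuous_on {0..b} (\<lambda>y. integral {0..y} f)"
    by (rule indefinite_integral_continuous_1) (rule lb_integral_eq(2)[OF assms])
  then show ?thesis
    by (rule continuous_on_cong[THEN iffD1, rotated 2]) (auto simp: lb_integral_eq(1)[OF assms(1)])
qed

lemma lb_min:
  fixes f :: "real \<Rightarrow> real"
  defines "h \<equiv> (\<lambda>y. LINT \<eta>:{0..y}|lborel. f \<eta>)"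
  assumes lbf: "lb f" and Y: "Y \<ge> 0" "\<And>\<eta>. \<eta> \<ge> Y \<Longrightarrow> f \<eta> \<ge> 0"
  shows "0 \<le> (LEAST y. 0 \<le> y \<and> h y = Inf (h ` {0..}))"
    "h (LEAST y. 0 \<le> y \<and> h y = Inf (h ` {0..})) = Inf (h ` {0..})"
    "\<And>y. y \<ge> 0 \<Longrightarrow> Inf (h ` {0..}) \<le> h y"
proof -
  have mono: "h Y \<le> h y" if "y \<ge> Y" for y
  proof -
    have i: "f integrable_on {0..y}" using lb_integral_eq(2)[OF lbf] Y that by auto
    have "integral {0..Y} f + integral {Y..y} f = integral {0..y} f"
      using Henstock_Kurzweil_Integration.integral_combine[where f=f and a=0 and c=Y and b=y] Y that i
      by auto
    moreover have "integral {Y..y} f \<ge> 0"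
      by (rule integral_nonneg) (use integrable_on_subinterval[OF i, of Y y] Y that in auto)
    ultimately show ?thesis unfolding h_def using lb_integral_eq(1)[OF lbf] Y that by auto
  qed
  have cont: "continuous_on {0..b} h" if "b \<ge> 0" for b
    unfolding h_def using lb_cont[OF lbf that] .
  obtain y0 where y0: "y0 \<in> {0..Y}" "\<forall>y\<in>{0..Y}. h y0 \<le> h y"
    using continuous_attains_inf[OF compact_Icc _ cont[OF Y(1)]] Y by auto
  have y0min: "h y0 \<le> h y" if "y \<ge> 0" for y
  proof (cases "y \<le> Y")
    case True then show ?thesis using y0 that by auto
  next
    case False then show ?thesis using y0(2)[rule_format, of Y] Y mono[of y] by auto
  qed
  have inf: "Inf (h ` {0..}) = h y0"
    by (rule cInf_eq_minimum) (use y0 y0min in auto)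
  show "\<And>y. y \<ge> 0 \<Longrightarrow> Inf (h ` {0..}) \<le> h y" using inf y0min by simp
  define S where "S = {y \<in> {0..y0}. h y = h y0}"
  have Sne: "S \<noteq> {}" using y0 by (auto simp: S_def intro!: exI[of _ y0])
  have Sc: "closed S" unfolding S_def
    by (rule continuous_closed_preimage_constant[OF cont]) (use y0 in auto)
  have Sb: "bdd_below S" unfolding S_def by (rule bdd_belowI[of _ 0]) auto
  have IS: "Inf S \<in> S" using closed_contains_Inf[OF Sne Sb Sc] .
  have L: "(LEAST y. 0 \<le> y \<and> h y = Inf (h ` {0..})) = Inf S"
  proof (rule Least_equality)
    show "0 \<le> Inf S \<and> h (Inf S) = Inf (h ` {0..})" using IS inf by (auto simp: S_def)
    fix y assume y: "0 \<le> y \<and> h y = Inf (h ` {0..})"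
    show "Inf S \<le> y"
    proof (cases "y \<le> y0")
      case True then have "y \<in> S" using y inf by (auto simp: S_def)
      then show ?thesis using Sb by (rule cInf_lower)
    next
      case False then show ?thesis using IS by (auto simp: S_def)
    qed
  qed
  show "0 \<le> (LEAST y. 0 \<le> y \<and> h y = Inf (h ` {0..}))"
    "h (LEAST y. 0 \<le> y \<and> h y = Inf (h ` {0..})) = Inf (h ` {0..})"
    unfolding L using IS inf by (auto simp: S_def)
qed


lemma F_lin:
  assumes "lb u0" "lb rho0" "y \<ge> 0"
  shows "Ffun u0 rho0 y x t = t * (LINT \<eta>:{0..y}|lborel. rho0 \<eta> * u0 \<eta>)
     + (LINT \<eta>:{0..y}|lborel. \<eta> * rho0 \<eta>) - x * (LINT \<eta>:{0..y}|lborel. rho0 \<eta>)"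
proof -
  have i1: "set_integrable lborel {0..y} (\<lambda>\<eta>. rho0 \<eta> * u0 \<eta>)"
    by (rule lb_integrable[OF lb_mult[OF assms(2,1)] assms(3)])
  have i2: "set_integrable lborel {0..y} (\<lambda>\<eta>. \<eta> * rho0 \<eta>)"
    by (rule lb_integrable[OF lb_mult[OF lb_id assms(2)] assms(3)])
  have i3: "set_integrable lborel {0..y} rho0"
    by (rule lb_integrable[OF assms(2,3)])
  have "Ffun u0 rho0 y x t = (LINT \<eta>:{0..y}|lborel. t * (rho0 \<eta> * u0 \<eta>) + \<eta> * rho0 \<eta> - x * rho0 \<eta>)"
    unfolding Ffun_def by (rule set_lebesgue_integral_cong) (auto simp: algebra_simps)
  also have "\<dots> = (LINT \<eta>:{0..y}|lborel. t * (rho0 \<eta> * u0 \<eta>) + \<eta> * rho0 \<eta>) - (LINT \<eta>:{0..y}|lborel. x * rho0 \<eta>)"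
    by (rule set_integral_diff) (use i1 i2 i3 in auto)
  also have "(LINT \<eta>:{0..y}|lborel. t * (rho0 \<eta> * u0 \<eta>) + \<eta> * rho0 \<eta>)
      = (LINT \<eta>:{0..y}|lborel. t * (rho0 \<eta> * u0 \<eta>)) + (LINT \<eta>:{0..y}|lborel. \<eta> * rho0 \<eta>)"
    by (rule set_integral_add) (use i1 i2 in auto)
  finally show ?thesis by simp
qed

lemma G_lin:
  assumes "lb ub" "lb rhob" "y \<ge> 0"
  shows "Gfun ub rhob y x t = x * (LINT \<eta>:{0..y}|lborel. rhob \<eta> * ub \<eta>)
     - t * (LINT \<eta>:{0..y}|lborel. rhob \<eta> * (ub \<eta>)\<^sup>2) + (LINT \<eta>:{0..y}|lborel. \<eta> * (rhob \<eta> * (ub \<eta>)\<^sup>2))"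
proof -
  have l2: "lb (\<lambda>\<eta>. rhob \<eta> * (ub \<eta>)\<^sup>2)"
    using lb_mult[OF assms(2) lb_mult[OF assms(1,1)]] by (simp add: power2_eq_square)
  have i1: "set_integrable lborel {0..y} (\<lambda>\<eta>. rhob \<eta> * ub \<eta>)"
    by (rule lb_integrable[OF lb_mult[OF assms(2,1)] assms(3)])
  have i2: "set_integrable lborel {0..y} (\<lambda>\<eta>. rhob \<eta> * (ub \<eta>)\<^sup>2)"
    by (rule lb_integrable[OF l2 assms(3)])
  have i3: "set_integrable lborel {0..y} (\<lambda>\<eta>. \<eta> * (rhob \<eta> * (ub \<eta>)\<^sup>2))"
    by (rule lb_integrable[OF lb_mult[OF lb_id l2] assms(3)])
  have "Gfun ub rhob y x t = (LINT \<eta>:{0..y}|lborel. x * (rhob \<eta> * ub \<eta>) - t * (rhob \<eta> * (ub \<eta>)\<^sup>2) + \<eta> * (rhob \<eta> * (ub \<eta>)\<^sup>2))"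
    unfolding Gfun_def by (rule set_lebesgue_integral_cong) (auto simp: algebra_simps power2_eq_square)
  also have "\<dots> = (LINT \<eta>:{0..y}|lborel. x * (rhob \<eta> * ub \<eta>) - t * (rhob \<eta> * (ub \<eta>)\<^sup>2)) + (LINT \<eta>:{0..y}|lborel. \<eta> * (rhob \<eta> * (ub \<eta>)\<^sup>2))"
    by (rule set_integral_add) (use i1 i2 i3 in auto)
  also have "(LINT \<eta>:{0..y}|lborel. x * (rhob \<eta> * ub \<eta>) - t * (rhob \<eta> * (ub \<eta>)\<^sup>2))
      = (LINT \<eta>:{0..y}|lborel. x * (rhob \<eta> * ub \<eta>)) - (LINT \<eta>:{0..y}|lborel. t * (rhob \<eta> * (ub \<eta>)\<^sup>2))"
    by (rule set_integral_diff) (use i1 i2 in auto)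
  finally show ?thesis by simp
qed

lemma F_facts:
  assumes "lb u0" "lb rho0" "\<forall>\<eta>\<ge>0. rho0 \<eta> > 0" "\<exists>C. \<forall>\<eta>\<ge>0. \<bar>u0 \<eta>\<bar> \<le> C" "t \<ge> 0"
  shows "0 \<le> ystar u0 rho0 x t" "Ffun u0 rho0 (ystar u0 rho0 x t) x t = Fmin u0 rho0 x t"
    "\<And>y. y \<ge> 0 \<Longrightarrow> Fmin u0 rho0 x t \<le> Ffun u0 rho0 y x t"
proof -
  obtain C where C: "\<forall>\<eta>\<ge>0. \<bar>u0 \<eta>\<bar> \<le> C" using assms(4) by blast
  have lbf: "lb (\<lambda>\<eta>. (t * u0 \<eta> + \<eta> - x) * rho0 \<eta>)"
    by (intro lb_mult lb_diff lb_add lb_const lb_id assms)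
  define Y where "Y = max 0 (x + t * C)"
  have Y: "Y \<ge> 0" by (simp add: Y_def)
  have pos: "(t * u0 \<eta> + \<eta> - x) * rho0 \<eta> \<ge> 0" if "\<eta> \<ge> Y" for \<eta>
  proof -
    have "\<eta> \<ge> 0" "\<eta> \<ge> x + t * C" using that by (auto simp: Y_def)
    moreover have "- C \<le> u0 \<eta>" using C \<open>\<eta> \<ge> 0\<close> by force
    then have "t * (- C) \<le> t * u0 \<eta>" using assms(5) by (rule mult_left_mono)
    ultimately have "t * u0 \<eta> + \<eta> - x \<ge> 0" by simp
    moreover have "rho0 \<eta> > 0" using assms(3) \<open>\<eta> \<ge> 0\<close> by auto
    ultimately show ?thesis by simp
  qed
  note M = lb_min[OF lbf Y pos]
  show "0 \<le> ystar u0 rho0 x t" "Ffun u0 rho0 (ystar u0 rho0 x t) x t = Fmin u0 rho0 x t"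
    "\<And>y. y \<ge> 0 \<Longrightarrow> Fmin u0 rho0 x t \<le> Ffun u0 rho0 y x t"
    using M unfolding ystar_def Fmin_def Ffun_def by auto
qed

lemma G_facts:
  assumes "lb ub" "lb rhob" "\<forall>\<eta>\<ge>0. rhob \<eta> > 0" "\<forall>\<eta>\<ge>0. ub \<eta> > 0" "x \<ge> 0"
  shows "0 \<le> taustar ub rhob x t" "Gfun ub rhob (taustar ub rhob x t) x t = Gmin ub rhob x t"
    "\<And>y. y \<ge> 0 \<Longrightarrow> Gmin ub rhob x t \<le> Gfun ub rhob y x t"
proof -
  have lbf: "lb (\<lambda>\<eta>. (x - ub \<eta> * (t - \<eta>)) * rhob \<eta> * ub \<eta>)"
    by (intro lb_mult lb_diff lb_add lb_const lb_id assms)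
  define Y where "Y = max 0 t"
  have Y: "Y \<ge> 0" by (simp add: Y_def)
  have pos: "(x - ub \<eta> * (t - \<eta>)) * rhob \<eta> * ub \<eta> \<ge> 0" if "\<eta> \<ge> Y" for \<eta>
  proof -
    have e: "\<eta> \<ge> 0" "t - \<eta> \<le> 0" using that by (auto simp: Y_def)
    have u: "ub \<eta> > 0" "rhob \<eta> > 0" using assms e by auto
    have "ub \<eta> * (t - \<eta>) \<le> 0" using u e by (simp add: mult_nonneg_nonpos)
    then have "x - ub \<eta> * (t - \<eta>) \<ge> 0" using assms(5) by simp
    then show ?thesis using u by simp
  qed
  note M = lb_min[OF lbf Y pos]
  show "0 \<le> taustar ub rhob x t" "Gfun ub rhob (taustar ub rhob x t) x t = Gmin ub rhob x t"
    "\<And>y. y \<ge> 0 \<Longrightarrow> Gmin ub rhob x t \<le> Gfun ub rhob y x t"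
    using M unfolding taustar_def Gmin_def Gfun_def by auto
qed


theorem lemma3p5:
  fixes u0 ub rho0 rhob :: "real \<Rightarrow> real"
  assumes u0_meas: "set_borel_measurable borel {0..} u0"
      and ub_meas: "set_borel_measurable borel {0..} ub"
      and rho0_meas: "set_borel_measurable borel {0..} rho0"
      and rhob_meas: "set_borel_measurable borel {0..} rhob"
      and u0_bdd: "\<exists>C. \<forall>\<eta>\<ge>0. \<bar>u0 \<eta>\<bar> \<le> C"
      and ub_bdd: "\<exists>C. \<forall>\<eta>\<ge>0. \<bar>ub \<eta>\<bar> \<le> C"
      and ub_pos: "\<forall>\<eta>\<ge>0. ub \<eta> > 0"
      and rho0_pos: "\<forall>\<eta>\<ge>0. rho0 \<eta> > 0"
      and rhob_pos: "\<forall>\<eta>\<ge>0. rhob \<eta> > 0"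
      and rho0_lbdd: "\<forall>b\<ge>0. \<exists>C. \<forall>\<eta>\<in>{0..b}. rho0 \<eta> \<le> C"
      and rhob_lbdd: "\<forall>b\<ge>0. \<exists>C. \<forall>\<eta>\<in>{0..b}. rhob \<eta> \<le> C"
  shows "(\<forall>x1 x2 t. x1 > 0 \<longrightarrow> x2 > 0 \<longrightarrow> t > 0 \<longrightarrow>
            interval_lebesgue_integrable lborel (ereal x1) (ereal x2)
              (\<lambda>x. mfun u0 rho0 ub rhob x t) \<and>
            (LBINT x=x1..x2. mfun u0 rho0 ub rhob x t)
              = mu u0 rho0 ub rhob x1 t - mu u0 rho0 ub rhob x2 t)
       \<and> (\<forall>x t1 t2. x > 0 \<longrightarrow> t1 > 0 \<longrightarrow> t2 > 0 \<longrightarrow>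
            interval_lebesgue_integrable lborel (ereal t1) (ereal t2)
              (\<lambda>t. qfun u0 rho0 ub rhob x t) \<and>
            (LBINT t=t1..t2. qfun u0 rho0 ub rhob x t)
              = mu u0 rho0 ub rhob x t2 - mu u0 rho0 ub rhob x t1)"
proof -
  have lu0: "lb u0" unfolding lb_def
    using u0_meas u0_bdd by (auto simp: sbm_iff) (metis atLeastAtMost_iff)
  have lub: "lb ub" unfolding lb_def
    using ub_meas ub_bdd by (auto simp: sbm_iff) (metis atLeastAtMost_iff)
  have lrho0: "lb rho0" unfolding lb_def
  proof safe
    show "rho0 \<in> borel_measurable (restrict_space borel {0..})" using rho0_meas by (simp add: sbm_iff)
    fix b :: real assume "b \<ge> 0"
    then obtain C where "\<forall>\<eta>\<in>{0..b}. rho0 \<eta> \<le> C" using rho0_lbdd by blast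
    then show "\<exists>C. \<forall>\<eta>\<in>{0..b}. \<bar>rho0 \<eta>\<bar> \<le> C" using rho0_pos
      by (intro exI[of _ C]) (auto simp: abs_of_pos)
  qed
  have lrhob: "lb rhob" unfolding lb_def
  proof safe
    show "rhob \<in> borel_measurable (restrict_space borel {0..})" using rhob_meas by (simp add: sbm_iff)
    fix b :: real assume "b \<ge> 0"
    then obtain C where "\<forall>\<eta>\<in>{0..b}. rhob \<eta> \<le> C" using rhob_lbdd by blast
    then show "\<exists>C. \<forall>\<eta>\<in>{0..b}. \<bar>rhob \<eta>\<bar> \<le> C" using rhob_pos
      by (intro exI[of _ C]) (auto simp: abs_of_pos)
  qed
  note FF = F_facts[OF lu0 lrho0 rho0_pos u0_bdd]
  note GF = G_facts[OF lub lrhob rhob_pos ub_pos]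
  note FL = F_lin[OF lu0 lrho0]
  note GL = G_lin[OF lub lrhob]
  let ?mu = "mu u0 rho0 ub rhob"
  let ?m = "mfun u0 rho0 ub rhob"
  let ?q = "qfun u0 rho0 ub rhob"
  have sgx: "?mu x' t \<le> ?mu x t + (- ?m x t) * (x' - x)" if "x > 0" "x' > 0" "t > 0" for x x' t
  proof (cases "Fmin u0 rho0 x t \<le> Gmin ub rhob x t")
    case True
    define ys where "ys = ystar u0 rho0 x t"
    have ys: "ys \<ge> 0" using FF(1) that by (simp add: ys_def)
    have "?mu x' t \<le> Fmin u0 rho0 x' t" by (simp add: mu_def)
    also have "\<dots> \<le> Ffun u0 rho0 ys x' t" using FF(3) that ys by simp
    also have "\<dots> = Ffun u0 rho0 ys x t - (x' - x) * (LINT \<eta>:{0..ys}|lborel. rho0 \<eta>)"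
      using FL[OF ys, of x' t] FL[OF ys, of x t] by (simp add: algebra_simps)
    also have "Ffun u0 rho0 ys x t = ?mu x t" using FF(2) that True by (simp add: ys_def mu_def)
    also have "(LINT \<eta>:{0..ys}|lborel. rho0 \<eta>) = ?m x t" using True by (simp add: mfun_def ys_def)
    finally show ?thesis by (simp add: algebra_simps)
  next
    case False
    define ts where "ts = taustar ub rhob x t"
    have ts: "ts \<ge> 0" using GF(1) that by (simp add: ts_def)
    have "?mu x' t \<le> Gmin ub rhob x' t" by (simp add: mu_def)
    also have "\<dots> \<le> Gfun ub rhob ts x' t" using GF(3) that ts by simp
    also have "\<dots> = Gfun ub rhob ts x t + (x' - x) * (LINT \<eta>:{0..ts}|lborel. rhob \<eta> * ub \<eta>)"
      using GL[OF ts, of x' t] GL[OF ts, of x t] by (simp add: algebra_simps)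
    also have "Gfun ub rhob ts x t = ?mu x t" using GF(2) that False by (simp add: ts_def mu_def)
    also have "(LINT \<eta>:{0..ts}|lborel. rhob \<eta> * ub \<eta>) = - ?m x t" using False by (simp add: mfun_def ts_def)
    finally show ?thesis by (simp add: algebra_simps)
  qed
  have sgt: "?mu x t' \<le> ?mu x t + ?q x t * (t' - t)" if "x > 0" "t > 0" "t' > 0" for x t t'
  proof (cases "Fmin u0 rho0 x t \<le> Gmin ub rhob x t")
    case True
    define ys where "ys = ystar u0 rho0 x t"
    have ys: "ys \<ge> 0" using FF(1) that by (simp add: ys_def)
    have "?mu x t' \<le> Fmin u0 rho0 x t'" by (simp add: mu_def)
    also have "\<dots> \<le> Ffun u0 rho0 ys x t'" using FF(3) that ys by simp
    also have "\<dots> = Ffun u0 rho0 ys x t + (t' - t) * (LINT \<eta>:{0..ys}|lborel. rho0 \<eta> * u0 \<eta>)"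
      using FL[OF ys, of x t'] FL[OF ys, of x t] by (simp add: algebra_simps)
    also have "Ffun u0 rho0 ys x t = ?mu x t" using FF(2) that True by (simp add: ys_def mu_def)
    also have "(LINT \<eta>:{0..ys}|lborel. rho0 \<eta> * u0 \<eta>) = ?q x t" using True by (simp add: qfun_def ys_def)
    finally show ?thesis by (simp add: algebra_simps)
  next
    case False
    define ts where "ts = taustar ub rhob x t"
    have ts: "ts \<ge> 0" using GF(1) that by (simp add: ts_def)
    have "?mu x t' \<le> Gmin ub rhob x t'" by (simp add: mu_def)
    also have "\<dots> \<le> Gfun ub rhob ts x t'" using GF(3) that ts by simp
    also have "\<dots> = Gfun ub rhob ts x t - (t' - t) * (LINT \<eta>:{0..ts}|lborel. rhob \<eta> * (ub \<eta>)\<^sup>2)"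
      using GL[OF ts, of x t'] GL[OF ts, of x t] by (simp add: algebra_simps)
    also have "Gfun ub rhob ts x t = ?mu x t" using GF(2) that False by (simp add: ts_def mu_def)
    also have "(LINT \<eta>:{0..ts}|lborel. rhob \<eta> * (ub \<eta>)\<^sup>2) = - ?q x t" using False by (simp add: qfun_def ts_def)
    finally show ?thesis by (simp add: algebra_simps)
  qed
  show ?thesis
  proof (intro conjI allI impI)
    fix x1 x2 t :: real assume h: "x1 > 0" "x2 > 0" "t > 0"
    have R: "interval_lebesgue_integrable lborel (ereal x1) (ereal x2) (\<lambda>x. - ?m x t) \<and>
      (LBINT x=x1..x2. - ?m x t) = ?mu x2 t - ?mu x1 t"
      by (rule supergrad_FTC[where \<phi>="\<lambda>x. ?mu x t"]) (use sgx h in auto)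
    have "interval_lebesgue_integrable lborel (ereal x1) (ereal x2) (\<lambda>x. (-1) * - ?m x t)"
      using R by (intro interval_lebesgue_integrable_mult_right) blast
    then show "interval_lebesgue_integrable lborel (ereal x1) (ereal x2) (\<lambda>x. ?m x t)" by simp
    show "(LBINT x=x1..x2. ?m x t) = ?mu x1 t - ?mu x2 t"
      using R interval_lebesgue_integral_uminus[of lborel x1 x2 "\<lambda>x. ?m x t"] by simp
  next
    fix x t1 t2 :: real assume h: "x > 0" "t1 > 0" "t2 > 0"
    have R: "interval_lebesgue_integrable lborel (ereal t1) (ereal t2) (\<lambda>t. ?q x t) \<and>
      (LBINT t=t1..t2. ?q x t) = ?mu x t2 - ?mu x t1"
      by (rule supergrad_FTC[where \<phi>="\<lambda>t. ?mu x t"]) (use sgt h in auto)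
    then show "interval_lebesgue_integrable lborel (ereal t1) (ereal t2) (\<lambda>t. ?q x t)"
      "(LBINT t=t1..t2. ?q x t) = ?mu x t2 - ?mu x t1" by auto
  qed
qed

end
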